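(* Let $k\ge1$, let $D$ be a digraph containing a cylindrical wall $W$ of order $l\ge 3k$ with vertical dicycles $Q_1,\dots,Q_l$. Then for every $(A,B)\in\mathcal{S}_k(D)$ there is exactly one side $X\in\{A,B\}$ such that $X\setminus(A\cap B)$ contains $V(Q_i)$ for some $i\in[l]$. Moreover, the map $\mathsf{big}_W$ sending each $(A,B)\in\mathcal{S}_k(D)$ to this side is a tangle of order $k$.
   Context: The elementary cylindrical $l$-wall has vertices $v_{r,c}$, $r,c\in[2l]$, and edges: for odd $r$, $(v_{r,c},v_{r,c+1})$ ($c\in[2l-1]$); for even $r$, $(v_{r,c+1},v_{r,c})$ ($c\in[2l-1]$); $(v_{r,c},v_{r+1,c})$ for $r$ odd and $c$ even; $(v_{r,c},v_{r+1,c})$ for $r<2l$ even and $c$ odd; and $(v_{2l,c},v_{1,c})$ for $c$ odd. For $j\in[l]$ its $j$-th vertical dicycle is the dicycle using exactly the vertices of columns $2j-1$ and $2j$. A cylindrical $l$-wall is a subdivision of it, with vertical dicycles $Q_1,\dots,Q_l$ the subdivided images of these. A directed separation is $(A,B)$ with $A\cup B=V(D)$ and no edge from $B\setminus A$ to $A\setminus B$; its order is $|A\cap B|$; $\mathcal{S}_k(D)$ is the set of directed separations of order $<k$. An orientation assigns to each $(A,B)\in\mathcal{S}_k$ a big side in $\{A,B\}$, the other being the small side; it is a tangle of order $k$ if no three small sides (of not necessarily distinct separations in $\mathcal{S}_k$) have union $V(D)$. *)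

theory Defs
  imports Main
begin

definition digraph :: "'a set \<Rightarrow> ('a \<times> 'a) set \<Rightarrow> bool" where
  "digraph V E \<longleftrightarrow> finite V \<and> E \<subseteq> V \<times> V"

definition dipath :: "('a \<times> 'a) set \<Rightarrow> 'a list \<Rightarrow> bool" where
  "dipath E p \<longleftrightarrow> p \<noteq> [] \<and> distinct p \<and> (\<forall>i. Suc i < length p \<longrightarrow> (p ! i, p ! Suc i) \<in> E)"

definition inner :: "'a list \<Rightarrow> 'a set" where
  "inner p = set (butlast (tl p))"

definition ewall_V :: "nat \<Rightarrow> (nat \<times> nat) set" where
  "ewall_V l = {(r, c). 1 \<le> r \<and> r \<le> 2 * l \<and> 1 \<le> c \<and> c \<le> 2 * l}"

definition ewall_E :: "nat \<Rightarrow> ((nat \<times> nat) \<times> (nat \<times> nat)) set" where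
  "ewall_E l =
     {((r, c), (r, c + 1)) | r c. odd r \<and> 1 \<le> r \<and> r \<le> 2 * l \<and> 1 \<le> c \<and> c \<le> 2 * l - 1}
   \<union> {((r, c + 1), (r, c)) | r c. even r \<and> 1 \<le> r \<and> r \<le> 2 * l \<and> 1 \<le> c \<and> c \<le> 2 * l - 1}
   \<union> {((r, c), (r + 1, c)) | r c. odd r \<and> 1 \<le> r \<and> r \<le> 2 * l \<and> even c \<and> 1 \<le> c \<and> c \<le> 2 * l}
   \<union> {((r, c), (r + 1, c)) | r c. even r \<and> 1 \<le> r \<and> r < 2 * l \<and> odd c \<and> 1 \<le> c \<and> c \<le> 2 * l}
   \<union> {((2 * l, c), (1, c)) | c. odd c \<and> 1 \<le> c \<and> c \<le> 2 * l}"

text \<open>D = (V,E) contains a cylindrical l-wall, i.e. a subdivision of the elementary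
  cylindrical l-wall: branch vertices phi, and each wall edge e is replaced by a
  directed path P e, internally disjoint from the branch vertices and from each other.\<close>

definition cyl_wall :: "'a set \<Rightarrow> ('a \<times> 'a) set \<Rightarrow> nat
    \<Rightarrow> (nat \<times> nat \<Rightarrow> 'a) \<Rightarrow> ((nat \<times> nat) \<times> (nat \<times> nat) \<Rightarrow> 'a list) \<Rightarrow> bool" where
  "cyl_wall V E l \<phi> P \<longleftrightarrow>
     inj_on \<phi> (ewall_V l) \<and> \<phi> ` ewall_V l \<subseteq> V \<and>
     (\<forall>e \<in> ewall_E l. dipath E (P e) \<and> set (P e) \<subseteq> V \<and>
         hd (P e) = \<phi> (fst e) \<and> last (P e) = \<phi> (snd e) \<and>
         inner (P e) \<inter> \<phi> ` ewall_V l = {}) \<and>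
     (\<forall>e \<in> ewall_E l. \<forall>e' \<in> ewall_E l. e \<noteq> e' \<longrightarrow> inner (P e) \<inter> inner (P e') = {})"

text \<open>Vertex set of the j-th vertical dicycle Q_j: the subdivided image of the dicycle
  on columns 2j-1 and 2j.\<close>

definition vert_cycle :: "nat \<Rightarrow> (nat \<times> nat \<Rightarrow> 'a)
    \<Rightarrow> ((nat \<times> nat) \<times> (nat \<times> nat) \<Rightarrow> 'a list) \<Rightarrow> nat \<Rightarrow> 'a set" where
  "vert_cycle l \<phi> P j =
     \<phi> ` {(r, c) \<in> ewall_V l. c = 2 * j - 1 \<or> c = 2 * j}
   \<union> (\<Union>e \<in> {((r, c), (r', c')) \<in> ewall_E l. (c = 2 * j - 1 \<or> c = 2 * j) \<and> (c' = 2 * j - 1 \<or> c' = 2 * j)}.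
        inner (P e))"

definition dsep :: "'a set \<Rightarrow> ('a \<times> 'a) set \<Rightarrow> 'a set \<Rightarrow> 'a set \<Rightarrow> bool" where
  "dsep V E A B \<longleftrightarrow> A \<union> B = V \<and> (\<forall>(x, y) \<in> E. \<not> (x \<in> B - A \<and> y \<in> A - B))"

definition S_k :: "'a set \<Rightarrow> ('a \<times> 'a) set \<Rightarrow> nat \<Rightarrow> ('a set \<times> 'a set) set" where
  "S_k V E k = {(A, B). dsep V E A B \<and> card (A \<inter> B) < k}"

definition small_side :: "('a set \<times> 'a set \<Rightarrow> 'a set) \<Rightarrow> 'a set \<times> 'a set \<Rightarrow> 'a set" where
  "small_side big s = (if big s = fst s then snd s else fst s)"

definition is_tangle :: "'a set \<Rightarrow> ('a \<times> 'a) set \<Rightarrow> nat \<Rightarrow> ('a set \<times> 'a set \<Rightarrow> 'a set) \<Rightarrow> bool" where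
  "is_tangle V E k big \<longleftrightarrow>
     (\<forall>s \<in> S_k V E k. big s \<in> {fst s, snd s}) \<and>
     (\<forall>s1 \<in> S_k V E k. \<forall>s2 \<in> S_k V E k. \<forall>s3 \<in> S_k V E k.
        small_side big s1 \<union> small_side big s2 \<union> small_side big s3 \<noteq> V)"

definition wall_side :: "nat \<Rightarrow> (nat \<times> nat \<Rightarrow> 'a)
    \<Rightarrow> ((nat \<times> nat) \<times> (nat \<times> nat) \<Rightarrow> 'a list) \<Rightarrow> 'a set \<times> 'a set \<Rightarrow> 'a set \<Rightarrow> bool" where
  "wall_side l \<phi> P s X \<longleftrightarrow> X \<in> {fst s, snd s} \<and>
     (\<exists>i \<in> {1..l}. vert_cycle l \<phi> P i \<subseteq> X - (fst s \<inter> snd s))"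

definition big_W :: "nat \<Rightarrow> (nat \<times> nat \<Rightarrow> 'a)
    \<Rightarrow> ((nat \<times> nat) \<times> (nat \<times> nat) \<Rightarrow> 'a list) \<Rightarrow> 'a set \<times> 'a set \<Rightarrow> 'a set" where
  "big_W l \<phi> P s = (THE X. wall_side l \<phi> P s X)"

end

theory Submission
  imports Defs
begin

definition Cj :: "nat \<Rightarrow> nat \<Rightarrow> (nat \<times> nat) set" where
  "Cj l j = {(r, c) \<in> ewall_V l. c = 2 * j - 1 \<or> c = 2 * j}"
definition Fj :: "nat \<Rightarrow> nat \<Rightarrow> ((nat \<times> nat) \<times> (nat \<times> nat)) set" where
  "Fj l j = {((r, c), (r', c')) \<in> ewall_E l. (c = 2 * j - 1 \<or> c = 2 * j) \<and> (c' = 2 * j - 1 \<or> c' = 2 * j)}"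

lemma E1: "1 \<le> j \<Longrightarrow> j \<le> l \<Longrightarrow> odd r \<Longrightarrow> 1 \<le> r \<Longrightarrow> r \<le> 2*l \<Longrightarrow> ((r,2*j-1),(r,2*j)) \<in> Fj l j"
  unfolding Fj_def ewall_E_def
  by (simp; arith)

lemma E2: "1 \<le> j \<Longrightarrow> j \<le> l \<Longrightarrow> even r \<Longrightarrow> 1 \<le> r \<Longrightarrow> r \<le> 2*l \<Longrightarrow> ((r,2*j),(r,2*j-1)) \<in> Fj l j"
  unfolding Fj_def ewall_E_def
  by (simp; arith)

lemma E3: "1 \<le> j \<Longrightarrow> j \<le> l \<Longrightarrow> odd r \<Longrightarrow> 1 \<le> r \<Longrightarrow> r \<le> 2*l \<Longrightarrow> ((r,2*j),(r+1,2*j)) \<in> Fj l j"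
  unfolding Fj_def ewall_E_def by auto

lemma E4: "1 \<le> j \<Longrightarrow> j \<le> l \<Longrightarrow> even r \<Longrightarrow> 1 \<le> r \<Longrightarrow> r < 2*l \<Longrightarrow> ((r,2*j-1),(r+1,2*j-1)) \<in> Fj l j"
  unfolding Fj_def ewall_E_def by auto

lemma E5: "1 \<le> j \<Longrightarrow> j \<le> l \<Longrightarrow> ((2*l,2*j-1),(1,2*j-1)) \<in> Fj l j"
  unfolding Fj_def ewall_E_def by auto

lemma col_closed:
  assumes j: "1 \<le> j" "j \<le> l" and cl: "\<And>e. e \<in> Fj l j \<Longrightarrow> fst e \<in> T \<Longrightarrow> snd e \<in> T"
    and w: "w \<in> Cj l j" "w \<in> T"
  shows "Cj l j \<subseteq> T"
proof -
  define a where "a = 2*j-1"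
  define b where "b = 2*j"
  have S1: "(r,b) \<in> T" if "odd r" "1 \<le> r" "r \<le> 2*l" "(r,a) \<in> T" for r
    using cl[OF E1[OF j that(1-3)]] that(4) by (simp add: a_def b_def)
  have S2: "(r,a) \<in> T" if "even r" "1 \<le> r" "r \<le> 2*l" "(r,b) \<in> T" for r
    using cl[OF E2[OF j that(1-3)]] that(4) by (simp add: a_def b_def)
  have S3: "(r+1,b) \<in> T" if "odd r" "1 \<le> r" "r \<le> 2*l" "(r,b) \<in> T" for r
    using cl[OF E3[OF j that(1-3)]] that(4) by (simp add: a_def b_def)
  have S4: "(r+1,a) \<in> T" if "even r" "1 \<le> r" "r < 2*l" "(r,a) \<in> T" for r
    using cl[OF E4[OF j that(1-3)]] that(4) by (simp add: a_def b_def)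
  have S5: "(1,a) \<in> T" if "(2*l,a) \<in> T"
    using cl[OF E5[OF j]] that by (simp add: a_def b_def)
  have G: "\<forall>r. 2*l - r = n \<longrightarrow> even r \<longrightarrow> 1 \<le> r \<longrightarrow> r \<le> 2*l \<longrightarrow> (r,a) \<in> T \<longrightarrow> (2*l,a) \<in> T" for n
  proof (induction n rule: less_induct)
    case (less n)
    show ?case
    proof (intro allI impI)
      fix r assume h: "2*l - r = n" "even r" "1 \<le> r" "r \<le> 2*l" "(r,a) \<in> T"
      show "(2*l,a) \<in> T"
      proof (cases "r = 2*l")
        case True then show ?thesis using h by simp
      next
        case False
        then have lt: "r + 2 \<le> 2*l" using h by presburger
        have "(r+1,a) \<in> T" using S4 h lt by simp
        then have "(r+1,b) \<in> T" using S1 h lt by simp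
        then have "(r+1+1,b) \<in> T" using S3[of "r+1"] h lt by simp
        then have "(r+2,a) \<in> T" using S2[of "r+2"] h lt by simp
        then show ?thesis using less.IH[of "2*l - (r+2)"] h lt by simp
      qed
    qed
  qed
  obtain r c where wrc: "w = (r,c)" by (cases w)
  have rc: "1 \<le> r" "r \<le> 2*l" "c = a \<or> c = b" using w wrc by (auto simp: Cj_def ewall_V_def a_def b_def)
  obtain r' where r': "even r'" "1 \<le> r'" "r' \<le> 2*l" "(r',a) \<in> T"
  proof (cases "even r")
    case True
    then have "(r,a) \<in> T" using rc w wrc S2 by auto
    then show ?thesis using that True rc by blast
  next
    case False
    have "(r,b) \<in> T" using rc w wrc S1 False by auto
    then have "(r+1,b) \<in> T" using S3 False rc by simp
    moreover have "r + 1 \<le> 2*l" using False rc by presburger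
    ultimately have "(r+1,a) \<in> T" using S2[of "r+1"] False by simp
    then show ?thesis using that[of "r+1"] False rc \<open>r + 1 \<le> 2*l\<close> by simp
  qed
  have "(2*l,a) \<in> T" using G r' by blast
  then have one: "(1,a) \<in> T" by (rule S5)
  have B: "\<forall>m. 2*m+1 \<le> 2*l \<longrightarrow> (2*m+1,a) \<in> T" 
  proof
    fix m show "2*m+1 \<le> 2*l \<longrightarrow> (2*m+1,a) \<in> T"
    proof (induction m)
      case 0 then show ?case using one by simp
    next
      case (Suc m)
      show ?case
      proof
        assume h: "2*Suc m+1 \<le> 2*l"
        then have "(2*m+1,a) \<in> T" using Suc by simp
        then have "(2*m+1,b) \<in> T" using S1 h by simp
        then have "(2*m+1+1,b) \<in> T" using S3[of "2*m+1"] h by simp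
        then have "(2*m+2,a) \<in> T" using S2[of "2*m+2"] h by simp
        then have "(2*m+2+1,a) \<in> T" using S4[of "2*m+2"] h by simp
        then show "(2*Suc m+1,a) \<in> T" by simp
      qed
    qed
  qed
  have odd_ok: "(r,a) \<in> T \<and> (r,b) \<in> T" if "odd r" "1 \<le> r" "r \<le> 2*l" for r
  proof -
    obtain m where "r = 2*m+1" using \<open>odd r\<close> oddE by blast
    then have "(r,a) \<in> T" using B that by simp
    then show ?thesis using S1 that by simp
  qed
  show ?thesis
  proof
    fix x assume x: "x \<in> Cj l j"
    obtain r c where xrc: "x = (r,c)" by (cases x)
    have rc: "1 \<le> r" "r \<le> 2*l" "c = a \<or> c = b" using x xrc by (auto simp: Cj_def ewall_V_def a_def b_def)
    show "x \<in> T"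
    proof (cases "odd r")
      case True then show ?thesis using odd_ok rc xrc by auto
    next
      case False
      then have o: "odd (r-1)" "1 \<le> r-1" "r - 1 + 1 = r" using rc by presburger+
      have "(r-1,b) \<in> T" using odd_ok[of "r-1"] o rc by simp
      then have "(r,b) \<in> T" using S3[of "r-1"] o rc by simp
      moreover then have "(r,a) \<in> T" using S2 False rc by simp
      ultimately show ?thesis using rc xrc by auto
    qed
  qed
qed

lemma prop_path:
  assumes ds: "dsep V E A B" and dp: "dipath E p" and sv: "set p \<subseteq> V"
    and dis: "set p \<inter> (A \<inter> B) = {}" and h: "hd p \<in> B - A"
  shows "set p \<subseteq> B - A"
proof -
  have "\<forall>i < length p. p ! i \<in> B - A"
  proof (intro allI impI)
    fix i assume "i < length p"
    then show "p ! i \<in> B - A"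
    proof (induction i)
      case 0 then show ?case using h dp by (simp add: hd_conv_nth dipath_def)
    next
      case (Suc i)
      have e: "(p!i, p!Suc i) \<in> E" using dp Suc.prems by (simp add: dipath_def)
      have i: "p!i \<in> B - A" using Suc by simp
      have "p!Suc i \<in> set p" using Suc.prems by simp
      then have "p!Suc i \<in> V" "p!Suc i \<notin> A \<inter> B" using sv dis by blast+
      then show ?case using ds e i unfolding dsep_def by fastforce
    qed
  qed
  then show ?thesis by (auto simp: in_set_conv_nth)
qed

lemma prop_path_last:
  assumes ds: "dsep V E A B" and dp: "dipath E p" and sv: "set p \<subseteq> V"
    and dis: "set p \<inter> (A \<inter> B) = {}" and x: "x \<in> set p" "x \<in> B - A"
  shows "last p \<in> B - A"
proof -
  obtain i where i: "i < length p" "p ! i = x" using x by (auto simp: in_set_conv_nth)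
  have dp': "dipath E (drop i p)" using dp i unfolding dipath_def
    by (auto simp: distinct_drop)
  have "set (drop i p) \<subseteq> B - A"
    apply (rule prop_path[OF ds dp'])
    using sv dis set_drop_subset[of i p] i x by (auto simp: hd_drop_conv_nth)
  moreover have "last p \<in> set (drop i p)"
  proof -
    have "drop i p \<noteq> []" using i by simp
    then have "last (drop i p) \<in> set (drop i p)" by (rule last_in_set)
    moreover have "last (drop i p) = last p" using i by simp
    ultimately show ?thesis by simp
  qed
  ultimately show ?thesis by blast
qed

lemma inner_sub: "inner p \<subseteq> set p"
  by (cases p) (auto simp: inner_def dest: in_set_butlastD)

lemma card_le_hit:
  assumes "finite S" "\<forall>i\<in>I. X i \<inter> S \<noteq> {}" "\<forall>i\<in>I. \<forall>j\<in>I. i \<noteq> j \<longrightarrow> X i \<inter> X j = {}"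
  shows "card I \<le> card S"
proof -
  define f where "f i = (SOME x. x \<in> X i \<inter> S)" for i
  have f: "f i \<in> X i \<inter> S" if "i \<in> I" for i
    unfolding f_def using assms(2) that by (metis ex_in_conv someI_ex)
  have "inj_on f I"
  proof (rule inj_onI, rule ccontr)
    fix x y assume h: "x \<in> I" "y \<in> I" "f x = f y" "x \<noteq> y"
    then have "f x \<in> X x \<inter> X y" using f[OF h(1)] f[OF h(2)] by auto
    then show False using assms(3) h by blast
  qed
  moreover have "f ` I \<subseteq> S" using f by blast
  ultimately show ?thesis using card_inj_on_le assms(1) by blast
qed

lemma ends: "e \<in> ewall_E l \<Longrightarrow> fst e \<in> ewall_V l \<and> snd e \<in> ewall_V l \<and> fst e \<noteq> snd e"
  apply (auto simp: ewall_E_def ewall_V_def)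
  by presburger+

lemma Fj_ends: assumes "e \<in> Fj l j" shows "e \<in> ewall_E l \<and> fst e \<in> Cj l j \<and> snd e \<in> Cj l j"
proof -
  obtain r c r' c' where e: "e = ((r,c),(r',c'))" by (metis prod.exhaust)
  have h: "e \<in> ewall_E l" "(c = 2 * j - 1 \<or> c = 2 * j) \<and> (c' = 2 * j - 1 \<or> c' = 2 * j)"
    using assms e by (auto simp: Fj_def)
  have "fst e \<in> ewall_V l" "snd e \<in> ewall_V l" using ends[OF h(1)] by auto
  then show ?thesis using h e by (auto simp: Cj_def)
qed

lemma Cj_sub: "Cj l j \<subseteq> ewall_V l" by (auto simp: Cj_def)
lemma Fj_sub: "Fj l j \<subseteq> ewall_E l" by (auto simp: Fj_def)

lemma Cj_disj: "i \<noteq> j \<Longrightarrow> Cj l i \<inter> Cj l j = {}"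
  by (auto simp: Cj_def ewall_V_def)

lemma Fj_disj: assumes "i \<noteq> j" shows "Fj l i \<inter> Fj l j = {}"
proof (rule ccontr)
  assume "Fj l i \<inter> Fj l j \<noteq> {}"
  then obtain e where e: "e \<in> Fj l i" "e \<in> Fj l j" by blast
  then have "fst e \<in> Cj l i" "fst e \<in> Cj l j" using Fj_ends by blast+
  then show False using Cj_disj[OF assms] by blast
qed

lemma vc_eq: "vert_cycle l \<phi> P j = \<phi> ` Cj l j \<union> (\<Union>e\<in>Fj l j. inner (P e))"
  by (simp add: vert_cycle_def Cj_def Fj_def)

definition Weven :: "nat \<Rightarrow> nat \<Rightarrow> nat \<Rightarrow> (nat \<times> nat) set" where
  "Weven i j m = {(2*m,c) | c. 2*i \<le> c \<and> c \<le> 2*j-1}"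
definition Feven :: "nat \<Rightarrow> nat \<Rightarrow> nat \<Rightarrow> ((nat \<times> nat) \<times> (nat \<times> nat)) set" where
  "Feven i j m = {((2*m,c+1),(2*m,c)) | c. 2*i \<le> c \<and> c \<le> 2*j-2}"
definition Wodd :: "nat \<Rightarrow> nat \<Rightarrow> nat \<Rightarrow> (nat \<times> nat) set" where
  "Wodd i j m = {(2*m-1,c) | c. 2*j \<le> c \<and> c \<le> 2*i-1}"
definition Fodd :: "nat \<Rightarrow> nat \<Rightarrow> nat \<Rightarrow> ((nat \<times> nat) \<times> (nat \<times> nat)) set" where
  "Fodd i j m = {((2*m-1,c),(2*m-1,c+1)) | c. 2*j \<le> c \<and> c \<le> 2*i-2}"

lemma Fe_mem: "1 \<le> i \<Longrightarrow> j \<le> l \<Longrightarrow> 1 \<le> m \<Longrightarrow> m \<le> l \<Longrightarrow> 2*i \<le> c \<Longrightarrow> c \<le> 2*j-2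
   \<Longrightarrow> ((2*m,c+1),(2*m,c)) \<in> ewall_E l"
  unfolding ewall_E_def by (simp; arith)

lemma Fo_mem: "1 \<le> j \<Longrightarrow> i \<le> l \<Longrightarrow> 1 \<le> m \<Longrightarrow> m \<le> l \<Longrightarrow> 2*j \<le> c \<Longrightarrow> c \<le> 2*i-2
   \<Longrightarrow> ((2*m-1,c),(2*m-1,c+1)) \<in> ewall_E l"
  unfolding ewall_E_def by (simp; arith)

lemma Feven_sub: "1 \<le> i \<Longrightarrow> j \<le> l \<Longrightarrow> 1 \<le> m \<Longrightarrow> m \<le> l \<Longrightarrow> Feven i j m \<subseteq> ewall_E l"
  unfolding Feven_def using Fe_mem by blast
lemma Fodd_sub: "1 \<le> j \<Longrightarrow> i \<le> l \<Longrightarrow> 1 \<le> m \<Longrightarrow> m \<le> l \<Longrightarrow> Fodd i j m \<subseteq> ewall_E l"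
  unfolding Fodd_def using Fo_mem by blast
lemma Weven_sub: "1 \<le> i \<Longrightarrow> j \<le> l \<Longrightarrow> 1 \<le> m \<Longrightarrow> m \<le> l \<Longrightarrow> Weven i j m \<subseteq> ewall_V l"
  unfolding Weven_def ewall_V_def by auto
lemma Wodd_sub: "1 \<le> j \<Longrightarrow> i \<le> l \<Longrightarrow> 1 \<le> m \<Longrightarrow> m \<le> l \<Longrightarrow> Wodd i j m \<subseteq> ewall_V l"
  unfolding Wodd_def ewall_V_def by auto
lemma Weven_disj: "m \<noteq> m' \<Longrightarrow> Weven i j m \<inter> Weven i j m' = {}"
  unfolding Weven_def by auto
lemma Feven_disj: "m \<noteq> m' \<Longrightarrow> Feven i j m \<inter> Feven i j m' = {}"
  unfolding Feven_def by auto
lemma Wodd_disj: "1 \<le> m \<Longrightarrow> 1 \<le> m' \<Longrightarrow> m \<noteq> m' \<Longrightarrow> Wodd i j m \<inter> Wodd i j m' = {}"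
  unfolding Wodd_def by auto
lemma Fodd_disj: "1 \<le> m \<Longrightarrow> 1 \<le> m' \<Longrightarrow> m \<noteq> m' \<Longrightarrow> Fodd i j m \<inter> Fodd i j m' = {}"
  unfolding Fodd_def by auto

context
  fixes V :: "'a set" and E and l and \<phi> :: "nat \<times> nat \<Rightarrow> 'a" and P
  assumes cw: "cyl_wall V E l \<phi> P"
begin

lemma cw_inj: "inj_on \<phi> (ewall_V l)"
  using cw[unfolded cyl_wall_def, THEN conjunct1] .
lemma cw_img: "\<phi> ` ewall_V l \<subseteq> V"
  using cw[unfolded cyl_wall_def, THEN conjunct2, THEN conjunct1] .
lemma cw_disj: "e \<in> ewall_E l \<Longrightarrow> e' \<in> ewall_E l \<Longrightarrow> e \<noteq> e' \<Longrightarrow> inner (P e) \<inter> inner (P e') = {}"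
  using cw[unfolded cyl_wall_def, THEN conjunct2, THEN conjunct2, THEN conjunct2] by blast
lemma P_props: "e \<in> ewall_E l \<Longrightarrow> dipath E (P e) \<and> set (P e) \<subseteq> V \<and> hd (P e) = \<phi> (fst e)
   \<and> last (P e) = \<phi> (snd e) \<and> inner (P e) \<inter> \<phi> ` ewall_V l = {}"
  using cw[unfolded cyl_wall_def, THEN conjunct2, THEN conjunct2, THEN conjunct1] by blast

lemma P_set: assumes e: "e \<in> ewall_E l" shows "set (P e) = {\<phi> (fst e), \<phi> (snd e)} \<union> inner (P e)"
proof -
  have pp: "dipath E (P e)" "hd (P e) = \<phi> (fst e)" "last (P e) = \<phi> (snd e)" using P_props[OF e] by auto
  have "\<phi> (fst e) \<noteq> \<phi> (snd e)" using ends[OF e] cw_inj unfolding inj_on_def by metis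
  moreover obtain x q where xq: "P e = x # q" using pp(1) unfolding dipath_def by (cases "P e") auto
  ultimately have q: "q \<noteq> []" using pp by auto
  have "set q = set (butlast q) \<union> {last q}" using q
    by (metis append_butlast_last_id set_append empty_set list.simps(15) Un_empty_right)
  then show ?thesis using xq q pp by (auto simp: inner_def)
qed

lemma U_sub: assumes "W \<subseteq> ewall_V l" "F \<subseteq> ewall_E l" shows "\<phi> ` W \<union> (\<Union>e\<in>F. inner (P e)) \<subseteq> V"
proof -
  have "\<phi> ` W \<subseteq> V" using cw_img assms(1) by blast
  moreover have "inner (P e) \<subseteq> V" if "e \<in> F" for e
    using inner_sub[of "P e"] P_props[of e] that assms(2) by blast
  ultimately show ?thesis by blast
qed

lemma U_disj:
  assumes "W1 \<subseteq> ewall_V l" "W2 \<subseteq> ewall_V l" "F1 \<subseteq> ewall_E l" "F2 \<subseteq> ewall_E l"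
    "W1 \<inter> W2 = {}" "F1 \<inter> F2 = {}"
  shows "(\<phi> ` W1 \<union> (\<Union>e\<in>F1. inner (P e))) \<inter> (\<phi> ` W2 \<union> (\<Union>e\<in>F2. inner (P e))) = {}"
proof -
  have inj: "inj_on \<phi> (ewall_V l)" by (rule cw_inj)
  have a: "\<phi> ` W1 \<inter> \<phi> ` W2 = {}"
  proof (rule ccontr)
    assume "\<phi> ` W1 \<inter> \<phi> ` W2 \<noteq> {}"
    then obtain w1 w2 where "w1 \<in> W1" "w2 \<in> W2" "\<phi> w1 = \<phi> w2" by blast
    then show False using inj assms(1,2,5) unfolding inj_on_def by blast
  qed
  have b: "inner (P e) \<inter> \<phi> ` ewall_V l = {}" if "e \<in> ewall_E l" for e using P_props[OF that] by blast
  have c: "inner (P e) \<inter> inner (P e') = {}" if "e \<in> F1" "e' \<in> F2" for e e'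
  proof -
    have "e \<noteq> e'" using that assms(6) by blast
    then show ?thesis using cw_disj that assms(3,4) by blast
  qed
  show ?thesis
  proof (rule ccontr)
    assume "\<not> ?thesis"
    then obtain x where x1: "x \<in> \<phi> ` W1 \<union> (\<Union>e\<in>F1. inner (P e))" and x2: "x \<in> \<phi> ` W2 \<union> (\<Union>e\<in>F2. inner (P e))"
      by blast
    show False
    proof (cases "x \<in> \<phi> ` W1")
      case True
      show False
      proof (cases "x \<in> \<phi> ` W2")
        case True then show False using a \<open>x \<in> \<phi> ` W1\<close> by blast
      next
        case False
        then obtain e where "e \<in> F2" "x \<in> inner (P e)" using x2 by blast
        then show False using b[of e] assms(1,4) \<open>x \<in> \<phi> ` W1\<close> by blast
      qed
    next
      case False
      then obtain e where e: "e \<in> F1" "x \<in> inner (P e)" using x1 by blast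
      show False
      proof (cases "x \<in> \<phi> ` W2")
        case True then show False using b[of e] assms(2,3) e by blast
      next
        case False
        then obtain e' where "e' \<in> F2" "x \<in> inner (P e')" using x2 by blast
        then show False using c[of e e'] e by blast
      qed
    qed
  qed
qed

lemma edge_prop:
  assumes ds: "dsep V E A B" and e: "e \<in> ewall_E l" and dis: "set (P e) \<inter> (A \<inter> B) = {}"
    and h: "\<phi> (fst e) \<in> B - A"
  shows "set (P e) \<subseteq> B - A"
  using prop_path[OF ds _ _ dis] P_props[OF e] h by auto

lemma edge_prop_last:
  assumes ds: "dsep V E A B" and e: "e \<in> ewall_E l" and dis: "set (P e) \<inter> (A \<inter> B) = {}"
    and x: "x \<in> set (P e)" "x \<in> B - A"
  shows "\<phi> (snd e) \<in> B - A"
  using prop_path_last[OF ds _ _ dis x] P_props[OF e] by auto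

lemma Pe_in_U:
  assumes "e \<in> F" "F \<subseteq> ewall_E l" "fst e \<in> W" "snd e \<in> W"
  shows "set (P e) \<subseteq> \<phi> ` W \<union> (\<Union>e\<in>F. inner (P e))"
proof -
  have "e \<in> ewall_E l" using assms(1,2) by (rule subsetD[rotated])
  then have s: "set (P e) = {\<phi> (fst e), \<phi> (snd e)} \<union> inner (P e)" by (rule P_set)
  have "\<phi> (fst e) \<in> \<phi> ` W" "\<phi> (snd e) \<in> \<phi> ` W" using assms(3,4) by auto
  moreover have "inner (P e) \<subseteq> (\<Union>e\<in>F. inner (P e))" using assms(1) by (rule UN_upper)
  ultimately show ?thesis unfolding s by auto
qed

lemma vc_sub: "vert_cycle l \<phi> P j \<subseteq> V"
  unfolding vc_eq by (rule U_sub[OF Cj_sub Fj_sub])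

lemma vc_disj: "i \<noteq> j \<Longrightarrow> vert_cycle l \<phi> P i \<inter> vert_cycle l \<phi> P j = {}"
  unfolding vc_eq by (rule U_disj[OF Cj_sub Cj_sub Fj_sub Fj_sub Cj_disj Fj_disj])

lemma vc_mem: "1 \<le> j \<Longrightarrow> j \<le> l \<Longrightarrow> 1 \<le> r \<Longrightarrow> r \<le> 2*l \<Longrightarrow> (c = 2*j-1 \<or> c = 2*j) \<Longrightarrow> \<phi> (r,c) \<in> vert_cycle l \<phi> P j"
  unfolding vc_eq Cj_def ewall_V_def by auto

lemma cyc_side:
  assumes ds: "dsep V E A B" and j: "1 \<le> j" "j \<le> l" and dis: "vert_cycle l \<phi> P j \<inter> (A \<inter> B) = {}"
  shows "vert_cycle l \<phi> P j \<subseteq> A - B \<or> vert_cycle l \<phi> P j \<subseteq> B - A"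
proof (subst disj_commute, rule disjCI)
  let ?Q = "vert_cycle l \<phi> P j"
  assume "\<not> ?Q \<subseteq> A - B"
  then obtain x where x: "x \<in> ?Q" "x \<notin> A - B" by blast
  have AB: "A \<union> B = V" using ds unfolding dsep_def by blast
  have xBA: "x \<in> B - A" using x vc_sub AB dis by blast
  have eset: "set (P e) \<subseteq> ?Q" if "e \<in> Fj l j" for e
    unfolding vc_eq using Pe_in_U[OF that Fj_sub] Fj_ends[OF that] by blast
  have edis: "set (P e) \<inter> (A \<inter> B) = {}" if "e \<in> Fj l j" for e using eset[OF that] dis by blast
  obtain w where w: "w \<in> Cj l j" "\<phi> w \<in> B - A"
  proof (cases "x \<in> \<phi> ` Cj l j")
    case True then show ?thesis using that xBA by blast
  next
    case False
    then obtain e where e: "e \<in> Fj l j" "x \<in> inner (P e)" using x(1) unfolding vc_eq by blast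
    have "x \<in> set (P e)" using inner_sub[of "P e"] e(2) by (rule subsetD)
    then have "\<phi> (snd e) \<in> B - A"
      using edge_prop_last[OF ds _ edis[OF e(1)] _ xBA] Fj_ends[OF e(1)] by blast
    then show ?thesis using that Fj_ends[OF e(1)] by blast
  qed
  define T where "T = {w \<in> Cj l j. \<phi> w \<in> B - A}"
  have CT: "Cj l j \<subseteq> T"
  proof (rule col_closed[OF j])
    fix e assume e: "e \<in> Fj l j" "fst e \<in> T"
    have "set (P e) \<subseteq> B - A"
      using edge_prop[OF ds _ edis[OF e(1)]] Fj_ends[OF e(1)] e(2) unfolding T_def by blast
    moreover have "\<phi> (snd e) \<in> set (P e)" using P_set Fj_ends[OF e(1)] by blast
    ultimately show "snd e \<in> T" using Fj_ends[OF e(1)] unfolding T_def by blast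
  next
    show "w \<in> Cj l j" "w \<in> T" using w unfolding T_def by auto
  qed
  show "?Q \<subseteq> B - A"
  proof
    fix y assume "y \<in> ?Q"
    then consider "y \<in> \<phi> ` Cj l j" | e where "e \<in> Fj l j" "y \<in> inner (P e)" unfolding vc_eq by blast
    then show "y \<in> B - A"
    proof cases
      case 1 then show ?thesis using CT unfolding T_def by blast
    next
      case (2 e)
      have "set (P e) \<subseteq> B - A"
        using edge_prop[OF ds _ edis[OF 2(1)]] Fj_ends[OF 2(1)] CT unfolding T_def by blast
      then show ?thesis using inner_sub[of "P e"] 2(2) by blast
    qed
  qed
qed

lemma row_even:
  assumes ds: "dsep V E A B" and i: "1 \<le> i" "i < j" "j \<le> l" and m: "1 \<le> m" "m \<le> l"
    and Qi: "vert_cycle l \<phi> P i \<subseteq> A - B" and Qj: "vert_cycle l \<phi> P j \<subseteq> B - A"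
  shows "(\<phi> ` Weven i j m \<union> (\<Union>e\<in>Feven i j m. inner (P e))) \<inter> (A \<inter> B) \<noteq> {}"
proof
  assume empty: "(\<phi> ` Weven i j m \<union> (\<Union>e\<in>Feven i j m. inner (P e))) \<inter> (A \<inter> B) = {}"
  have Fs: "set (P ((2*m,c+1),(2*m,c))) \<inter> (A \<inter> B) = {}" if "2*i \<le> c" "c \<le> 2*j-2" for c
  proof -
    have a: "((2*m,c+1),(2*m,c)) \<in> Feven i j m" unfolding Feven_def using that by auto
    have b: "(2*m,c+1) \<in> Weven i j m" "(2*m,c) \<in> Weven i j m" unfolding Weven_def using that i by auto
    have "set (P ((2*m,c+1),(2*m,c))) \<subseteq> \<phi> ` Weven i j m \<union> (\<Union>e\<in>Feven i j m. inner (P e))"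
      by (rule Pe_in_U[OF a Feven_sub[OF i(1) i(3) m]]) (use b in simp_all)
    then show ?thesis using empty by blast
  qed
  have ind: "d \<le> 2*j-1-2*i \<longrightarrow> \<phi> (2*m, 2*j-1-d) \<in> B - A" for d
  proof (induction d)
    case 0 show ?case using Qj vc_mem[of j "2*m" "2*j-1"] i m by auto
  next
    case (Suc d)
    show ?case
    proof
      assume h: "Suc d \<le> 2*j-1-2*i"
      define c where "c = 2*j-1-Suc d"
      have c: "2*i \<le> c" "c \<le> 2*j-2" "c + 1 = 2*j-1-d" using h i unfolding c_def by auto
      have e: "((2*m,c+1),(2*m,c)) \<in> ewall_E l" using Fe_mem[OF i(1) i(3) m c(1,2)] .
      have "\<phi> (2*m,c+1) \<in> B - A" using Suc.IH h c(3) by simp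
      then have "set (P ((2*m,c+1),(2*m,c))) \<subseteq> B - A"
        using edge_prop[OF ds e Fs[OF c(1,2)]] by simp
      moreover have "\<phi> (2*m,c) \<in> set (P ((2*m,c+1),(2*m,c)))" using P_set[OF e] by simp
      ultimately show "\<phi> (2*m, 2*j-1-Suc d) \<in> B - A" unfolding c_def by blast
    qed
  qed
  have "\<phi> (2*m, 2*i) \<in> B - A" using ind[of "2*j-1-2*i"] i by (simp add: diff_diff_right)
  moreover have "\<phi> (2*m, 2*i) \<in> A - B" using Qi vc_mem[of i "2*m" "2*i"] i m by auto
  ultimately show False by blast
qed

lemma row_odd:
  assumes ds: "dsep V E A B" and i: "1 \<le> j" "j < i" "i \<le> l" and m: "1 \<le> m" "m \<le> l"
    and Qi: "vert_cycle l \<phi> P i \<subseteq> A - B" and Qj: "vert_cycle l \<phi> P j \<subseteq> B - A"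
  shows "(\<phi> ` Wodd i j m \<union> (\<Union>e\<in>Fodd i j m. inner (P e))) \<inter> (A \<inter> B) \<noteq> {}"
proof
  assume empty: "(\<phi> ` Wodd i j m \<union> (\<Union>e\<in>Fodd i j m. inner (P e))) \<inter> (A \<inter> B) = {}"
  have Fs: "set (P ((2*m-1,c),(2*m-1,c+1))) \<inter> (A \<inter> B) = {}" if "2*j \<le> c" "c \<le> 2*i-2" for c
  proof -
    have a: "((2*m-1,c),(2*m-1,c+1)) \<in> Fodd i j m" unfolding Fodd_def using that by auto
    have b: "(2*m-1,c+1) \<in> Wodd i j m" "(2*m-1,c) \<in> Wodd i j m" unfolding Wodd_def using that i by auto
    have "set (P ((2*m-1,c),(2*m-1,c+1))) \<subseteq> \<phi> ` Wodd i j m \<union> (\<Union>e\<in>Fodd i j m. inner (P e))"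
      by (rule Pe_in_U[OF a Fodd_sub[OF i(1) i(3) m]]) (use b in simp_all)
    then show ?thesis using empty by blast
  qed
  have ind: "d \<le> 2*i-1-2*j \<longrightarrow> \<phi> (2*m-1, 2*j+d) \<in> B - A" for d
  proof (induction d)
    case 0
    have "\<phi> (2*m-1, 2*j) \<in> vert_cycle l \<phi> P j" by (rule vc_mem) (use i m in auto)
    then show ?case using Qj by auto
  next
    case (Suc d)
    show ?case
    proof
      assume h: "Suc d \<le> 2*i-1-2*j"
      define c where "c = 2*j+d"
      have c: "2*j \<le> c" "c \<le> 2*i-2" "c + 1 = 2*j+Suc d" using h i unfolding c_def by auto
      have e: "((2*m-1,c),(2*m-1,c+1)) \<in> ewall_E l" using Fo_mem[OF i(1) i(3) m c(1,2)] .
      have "\<phi> (2*m-1,c) \<in> B - A" using Suc.IH h unfolding c_def by simp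
      then have "set (P ((2*m-1,c),(2*m-1,c+1))) \<subseteq> B - A"
        using edge_prop[OF ds e Fs[OF c(1,2)]] by simp
      moreover have "\<phi> (2*m-1,c+1) \<in> set (P ((2*m-1,c),(2*m-1,c+1)))" using P_set[OF e] by simp
      ultimately have "\<phi> (2*m-1,c+1) \<in> B - A" by (rule subsetD)
      then show "\<phi> (2*m-1, 2*j+Suc d) \<in> B - A" using c(3) by simp
    qed
  qed
  have "\<phi> (2*m-1, 2*i-1) \<in> B - A" using ind[of "2*i-1-2*j"] i by simp
  moreover have "\<phi> (2*m-1, 2*i-1) \<in> vert_cycle l \<phi> P i" by (rule vc_mem) (use i m in auto)
  then have "\<phi> (2*m-1, 2*i-1) \<in> A - B" using Qi by auto
  ultimately show False by blast
qed

lemma two_sides: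
  assumes ds: "dsep V E A B" and fin: "finite V" and cd: "card (A \<inter> B) < l"
    and ij: "i \<in> {1..l}" "j \<in> {1..l}" and Qi: "vert_cycle l \<phi> P i \<subseteq> A - B"
    and Qj: "vert_cycle l \<phi> P j \<subseteq> B - A"
  shows False
proof -
  have AB: "A \<union> B = V" using ds unfolding dsep_def by blast
  have fS: "finite (A \<inter> B)" using fin AB by (metis finite_Int finite_Un)
  have "i \<noteq> j"
  proof
    assume "i = j"
    have "\<phi> (1, 2*i-1) \<in> vert_cycle l \<phi> P i" by (rule vc_mem) (use ij in auto)
    then show False using Qi Qj \<open>i = j\<close> by blast
  qed
  then consider "i < j" | "j < i" by linarith
  then show False
  proof cases
    case 1
    have "card {1..l} \<le> card (A \<inter> B)"
    proof (rule card_le_hit[OF fS, of "{1..l}" "\<lambda>m. \<phi> ` Weven i j m \<union> (\<Union>e\<in>Feven i j m. inner (P e))"])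
      show "\<forall>m\<in>{1..l}. (\<phi> ` Weven i j m \<union> (\<Union>e\<in>Feven i j m. inner (P e))) \<inter> (A \<inter> B) \<noteq> {}"
        using row_even[OF ds _ 1 _ _ _ Qi Qj] ij by auto
      show "\<forall>m\<in>{1..l}. \<forall>m'\<in>{1..l}. m \<noteq> m' \<longrightarrow> (\<phi> ` Weven i j m \<union> (\<Union>e\<in>Feven i j m. inner (P e))) \<inter>
          (\<phi> ` Weven i j m' \<union> (\<Union>e\<in>Feven i j m'. inner (P e))) = {}"
      proof (intro ballI impI)
        fix m m' assume m: "m \<in> {1..l}" "m' \<in> {1..l}" "m \<noteq> m'"
        have i1: "1 \<le> i" "j \<le> l" using ij by auto
        show "(\<phi> ` Weven i j m \<union> (\<Union>e\<in>Feven i j m. inner (P e))) \<inter>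
          (\<phi> ` Weven i j m' \<union> (\<Union>e\<in>Feven i j m'. inner (P e))) = {}"
          by (rule U_disj[OF Weven_sub[OF i1] Weven_sub[OF i1] Feven_sub[OF i1] Feven_sub[OF i1]
              Weven_disj[OF m(3)] Feven_disj[OF m(3)]]) (use m in auto)
      qed
    qed
    then show False using cd by simp
  next
    case 2
    have "card {1..l} \<le> card (A \<inter> B)"
    proof (rule card_le_hit[OF fS, of "{1..l}" "\<lambda>m. \<phi> ` Wodd i j m \<union> (\<Union>e\<in>Fodd i j m. inner (P e))"])
      show "\<forall>m\<in>{1..l}. (\<phi> ` Wodd i j m \<union> (\<Union>e\<in>Fodd i j m. inner (P e))) \<inter> (A \<inter> B) \<noteq> {}"
        using row_odd[OF ds _ 2 _ _ _ Qi Qj] ij by auto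
      show "\<forall>m\<in>{1..l}. \<forall>m'\<in>{1..l}. m \<noteq> m' \<longrightarrow> (\<phi> ` Wodd i j m \<union> (\<Union>e\<in>Fodd i j m. inner (P e))) \<inter>
          (\<phi> ` Wodd i j m' \<union> (\<Union>e\<in>Fodd i j m'. inner (P e))) = {}"
      proof (intro ballI impI)
        fix m m' assume m: "m \<in> {1..l}" "m' \<in> {1..l}" "m \<noteq> m'"
        have i1: "1 \<le> j" "i \<le> l" using ij by auto
        have d: "1 \<le> m" "1 \<le> m'" using m by auto
        show "(\<phi> ` Wodd i j m \<union> (\<Union>e\<in>Fodd i j m. inner (P e))) \<inter>
          (\<phi> ` Wodd i j m' \<union> (\<Union>e\<in>Fodd i j m'. inner (P e))) = {}"
          by (rule U_disj[OF Wodd_sub[OF i1] Wodd_sub[OF i1] Fodd_sub[OF i1] Fodd_sub[OF i1]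
              Wodd_disj[OF d m(3)] Fodd_disj[OF d m(3)]]) (use m in auto)
      qed
    qed
    then show False using cd by simp
  qed
qed

lemma main:
  assumes fin: "finite V" and k: "1 \<le> k" "3*k \<le> l"
  shows "(\<forall>s \<in> S_k V E k. \<exists>!X. wall_side l \<phi> P s X) \<and> is_tangle V E k (big_W l \<phi> P)"
proof -
  define bad where "bad s = {j \<in> {1..l}. vert_cycle l \<phi> P j \<inter> (fst s \<inter> snd s) \<noteq> {}}" for s
  have Sk: "dsep V E (fst s) (snd s) \<and> card (fst s \<inter> snd s) < k" if "s \<in> S_k V E k" for s
    using that unfolding S_k_def by auto
  have cdl: "card (fst s \<inter> snd s) < l" if "s \<in> S_k V E k" for s using Sk[OF that] k by linarith
  have fsep: "finite (fst s \<inter> snd s)" if "s \<in> S_k V E k" for s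
  proof -
    have "fst s \<union> snd s = V" using Sk[OF that] unfolding dsep_def by blast
    then show ?thesis using fin by (metis finite_Int finite_Un)
  qed
  have badsub: "bad s \<subseteq> {1..l}" for s unfolding bad_def by blast
  have badcard: "card (bad s) < k" if "s \<in> S_k V E k" for s
  proof -
    have "card (bad s) \<le> card (fst s \<inter> snd s)"
      by (rule card_le_hit[OF fsep[OF that], of "bad s" "vert_cycle l \<phi> P"])
         (auto simp: bad_def dest: vc_disj)
    then show ?thesis using Sk[OF that] by linarith
  qed
  have ne: "vert_cycle l \<phi> P j \<noteq> {}" if "j \<in> {1..l}" for j
  proof -
    have "\<phi> (1, 2*j-1) \<in> vert_cycle l \<phi> P j" by (rule vc_mem) (use that in auto)
    then show ?thesis by blast
  qed
  have good: "vert_cycle l \<phi> P j \<subseteq> X - (fst s \<inter> snd s)"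
    if s: "s \<in> S_k V E k" and j: "j \<in> {1..l}" "j \<notin> bad s" and ws: "wall_side l \<phi> P s X" for s j X
  proof -
    obtain A B where AB: "s = (A,B)" by (cases s)
    have ds: "dsep V E A B" and cd: "card (A \<inter> B) < l" using Sk[OF s] cdl[OF s] AB by auto
    have dis: "vert_cycle l \<phi> P j \<inter> (A \<inter> B) = {}" using j AB unfolding bad_def by auto
    have cs: "vert_cycle l \<phi> P j \<subseteq> A - B \<or> vert_cycle l \<phi> P j \<subseteq> B - A"
      by (rule cyc_side[OF ds _ _ dis]) (use j in auto)
    obtain i where i: "i \<in> {1..l}" "vert_cycle l \<phi> P i \<subseteq> X - (A \<inter> B)" and X: "X = A \<or> X = B"
      using ws AB unfolding wall_side_def by auto
    show ?thesis
    proof (cases "X = A")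
      case True
      then have Qi: "vert_cycle l \<phi> P i \<subseteq> A - B" using i by blast
      show ?thesis
      proof (cases "vert_cycle l \<phi> P j \<subseteq> A - B")
        case True then show ?thesis using AB \<open>X = A\<close> by auto
      next
        case False
        then have "vert_cycle l \<phi> P j \<subseteq> B - A" using cs by blast
        then show ?thesis using two_sides[OF ds fin cd i(1) j(1) Qi] by blast
      qed
    next
      case False
      then have XB: "X = B" using X by blast
      then have Qi: "vert_cycle l \<phi> P i \<subseteq> B - A" using i by blast
      show ?thesis
      proof (cases "vert_cycle l \<phi> P j \<subseteq> B - A")
        case True then show ?thesis using AB XB by auto
      next
        case False
        then have "vert_cycle l \<phi> P j \<subseteq> A - B" using cs by blast
        then show ?thesis using two_sides[OF ds fin cd j(1) i(1) _ Qi] by blast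
      qed
    qed
  qed
  have ex: "\<exists>j \<in> {1..l}. j \<notin> bad s" if s: "s \<in> S_k V E k" for s
  proof (rule ccontr)
    assume "\<not> ?thesis"
    then have "{1..l} \<subseteq> bad s" by blast
    moreover have "finite (bad s)" using badsub[of s] by (rule finite_subset) simp
    ultimately have "card {1..l} \<le> card (bad s)" by (rule card_mono[rotated])
    then show False using badcard[OF s] k by simp
  qed
  have uniq: "\<exists>!X. wall_side l \<phi> P s X" if s: "s \<in> S_k V E k" for s
  proof -
    obtain j where j: "j \<in> {1..l}" "j \<notin> bad s" using ex[OF s] by blast
    obtain A B where AB: "s = (A,B)" by (cases s)
    have ds: "dsep V E A B" using Sk[OF s] AB by auto
    have dis: "vert_cycle l \<phi> P j \<inter> (A \<inter> B) = {}" using j AB unfolding bad_def by auto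
    have cs: "vert_cycle l \<phi> P j \<subseteq> A - B \<or> vert_cycle l \<phi> P j \<subseteq> B - A"
      by (rule cyc_side[OF ds _ _ dis]) (use j in auto)
    have exX: "\<exists>X. wall_side l \<phi> P s X"
    proof (cases "vert_cycle l \<phi> P j \<subseteq> A - B")
      case True
      then have "wall_side l \<phi> P s A" unfolding wall_side_def using AB j by auto
      then show ?thesis by blast
    next
      case False
      then have "vert_cycle l \<phi> P j \<subseteq> B - A" using cs by blast
      then have "wall_side l \<phi> P s B" unfolding wall_side_def using AB j by auto
      then show ?thesis by blast
    qed
    have "X = Y" if "wall_side l \<phi> P s X" "wall_side l \<phi> P s Y" for X Y
    proof (rule ccontr)
      assume "X \<noteq> Y"
      have XY: "X \<in> {A,B}" "Y \<in> {A,B}" using that AB unfolding wall_side_def by auto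
      have "vert_cycle l \<phi> P j \<subseteq> X - (A \<inter> B)" "vert_cycle l \<phi> P j \<subseteq> Y - (A \<inter> B)"
        using good[OF s j that(1)] good[OF s j that(2)] AB by auto
      moreover have "(X - (A \<inter> B)) \<inter> (Y - (A \<inter> B)) = {}" using XY \<open>X \<noteq> Y\<close> by auto
      ultimately show False using ne[OF j(1)] by blast
    qed
    then show ?thesis using exX by blast
  qed
  have bigws: "wall_side l \<phi> P s (big_W l \<phi> P s)" if "s \<in> S_k V E k" for s
    unfolding big_W_def using uniq[OF that] by (rule theI')
  have t1: "\<forall>s \<in> S_k V E k. big_W l \<phi> P s \<in> {fst s, snd s}"
  proof
    fix s assume "s \<in> S_k V E k"
    from bigws[OF this] show "big_W l \<phi> P s \<in> {fst s, snd s}" unfolding wall_side_def by (rule conjunct1)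
  qed
  have t2: "small_side (big_W l \<phi> P) s1 \<union> small_side (big_W l \<phi> P) s2 \<union> small_side (big_W l \<phi> P) s3 \<noteq> V"
    if s: "s1 \<in> S_k V E k" "s2 \<in> S_k V E k" "s3 \<in> S_k V E k" for s1 s2 s3
  proof -
    have "card (bad s1 \<union> bad s2 \<union> bad s3) \<le> card (bad s1) + card (bad s2) + card (bad s3)"
    proof -
      have "card (bad s1 \<union> bad s2 \<union> bad s3) \<le> card (bad s1 \<union> bad s2) + card (bad s3)" by (rule card_Un_le)
      moreover have "card (bad s1 \<union> bad s2) \<le> card (bad s1) + card (bad s2)" by (rule card_Un_le)
      ultimately show ?thesis by linarith
    qed
    then have c: "card (bad s1 \<union> bad s2 \<union> bad s3) < l" using badcard[OF s(1)] badcard[OF s(2)] badcard[OF s(3)] k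
      by linarith
    have "\<not> {1..l} \<subseteq> bad s1 \<union> bad s2 \<union> bad s3"
    proof
      assume "{1..l} \<subseteq> bad s1 \<union> bad s2 \<union> bad s3"
      moreover have "finite (bad s1 \<union> bad s2 \<union> bad s3)" using badsub by (meson finite_Un finite_atLeastAtMost finite_subset)
      ultimately have "card {1..l} \<le> card (bad s1 \<union> bad s2 \<union> bad s3)" by (rule card_mono[rotated])
      then show False using c by simp
    qed
    then obtain j where j: "j \<in> {1..l}" "j \<notin> bad s1" "j \<notin> bad s2" "j \<notin> bad s3" by blast
    have dj: "vert_cycle l \<phi> P j \<inter> small_side (big_W l \<phi> P) s = {}"
      if "s \<in> S_k V E k" "j \<notin> bad s" for s
    proof -
      have g: "vert_cycle l \<phi> P j \<subseteq> big_W l \<phi> P s - (fst s \<inter> snd s)"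
        by (rule good[OF that(1) _ that(2) bigws[OF that(1)]]) (use j in auto)
      have "big_W l \<phi> P s \<in> {fst s, snd s}" using t1 that(1) by blast
      then show ?thesis using g unfolding small_side_def by auto
    qed
    have "vert_cycle l \<phi> P j \<subseteq> V" by (rule vc_sub)
    moreover obtain x where "x \<in> vert_cycle l \<phi> P j" using ne[OF j(1)] by blast
    ultimately have "x \<in> V" "x \<notin> small_side (big_W l \<phi> P) s1" "x \<notin> small_side (big_W l \<phi> P) s2"
      "x \<notin> small_side (big_W l \<phi> P) s3"
      using dj[OF s(1) j(2)] dj[OF s(2) j(3)] dj[OF s(3) j(4)] by blast+
    then show ?thesis by blast
  qed
  show ?thesis unfolding is_tangle_def
    apply (intro conjI ballI)
      apply (erule uniq)
     apply (use t1 in blast)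
    apply (rule t2; assumption)
    done
qed

end

theorem lemma9p2:
  fixes V :: "'a set" and E :: "('a \<times> 'a) set" and k l :: nat
    and \<phi> :: "nat \<times> nat \<Rightarrow> 'a" and P :: "(nat \<times> nat) \<times> (nat \<times> nat) \<Rightarrow> 'a list"
  assumes "digraph V E" and "k \<ge> 1" and "l \<ge> 3 * k"
    and "cyl_wall V E l \<phi> P"
  shows "(\<forall>s \<in> S_k V E k. \<exists>!X. wall_side l \<phi> P s X)
         \<and> is_tangle V E k (big_W l \<phi> P)"
proof -
  have fin: "finite V" using assms(1) unfolding digraph_def by blast
  show ?thesis by (rule main[OF assms(4) fin assms(2) assms(3)])
qed

end
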